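(* Let $n\ge1$, let $\mu,\nu\in\mathbb{R}^n$ be probability vectors, let $\gamma>0$, and let $\phi$ satisfy the Bregman assumption in the context with $\phi'_0=-\infty$. Let $\hat X,\tilde X\in U_\phi$, and let $\hat C,\tilde C\in S_h$ be the unique matrices in $S_h$ with $\mathcal{F}(\hat C)=\hat X$ and $\mathcal{F}(\tilde C)=\tilde X$. Then $$\|\hat C-\tilde C\|_\infty\le 2\gamma\,\|\phi'(\hat X)-\phi'(\tilde X)\|_\infty,$$ where $\phi'(X)$ denotes entrywise application and $\|\cdot\|_\infty$ is the maximum absolute entry.
   Context: Probability vectors have nonnegative entries summing to $1$. $\mathcal{U}(\mu,\nu):=\{X\in\mathbb{R}_+^{n\times n}: X\mathbf{1}=\mu,\ X^\top\mathbf{1}=\nu\}$. Bregman assumption on $\phi:\mathbb{R}\to(-\infty,+\infty]$: $I=\operatorname{dom}\phi$ is an interval with $(0,1)\subseteq\operatorname{int}(I)$; $\phi$ is of Legendre type (proper, closed, strictly convex on $\operatorname{int}(\operatorname{dom}\phi)$, essentially smooth); $\phi$ is $C^1$ on $\operatorname{int}(I)$. $\phi(X):=\sum_{i,j}\phi(X_{ij})$. $\mathcal{F}(C):=\arg\min_{X\in\mathcal{U}(\mu,\nu)}\{\langle C,X\rangle+\gamma\phi(X)\}$. $\phi'_0:=\lim_{x\to0^+}\phi'(x)$, $\phi'_1:=\lim_{x\to1^-}\phi'(x)$. With $\phi'_0=-\infty$: $\mathcal{T}_\phi(\mu,\nu):=\mathcal{U}(\mu,\nu)\cap(0,1]^{n\times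 n}$ if $\phi'_1$ is finite and $\mathcal{U}(\mu,\nu)\cap(0,1)^{n\times n}$ if $\phi'_1=+\infty$. $S_h:=\{C\in\mathbb{R}_+^{n\times n}: C=C^\top,\ \operatorname{diag}(C)=0\}$. $(G_\phi^\gamma(X))_{ij}:=\frac{\gamma}{2}\big(\phi'(X_{ii})+\phi'(X_{jj})-\phi'(X_{ij})-\phi'(X_{ji})\big)$, and $U_\phi:=\{X\in\mathcal{T}_\phi(\mu,\nu): (G_\phi^\gamma(X))_{ij}\ge0\ \forall i,j\}$. (It is known that $\mathcal{F}$ restricted to $S_h$ is a bijection onto $U_\phi$, so $\hat C,\tilde C$ are well defined.) *)

theory Defs
  imports "HOL-Analysis.Analysis"
begin

text \<open>A function phi : R -> (-inf, +inf] is modelled as a map real => ereal.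
  Matrices are real-valued functions on a finite nonempty index type 'n (so n = CARD('n) >= 1).\<close>

definition edom :: "(real \<Rightarrow> ereal) \<Rightarrow> real set" where
  "edom \<phi> = {x. \<phi> x < \<infinity>}"

text \<open>phi' : the ordinary derivative of phi (meaningful on the interior of the domain,
  where phi is finite).\<close>
definition dphi :: "(real \<Rightarrow> ereal) \<Rightarrow> real \<Rightarrow> real" where
  "dphi \<phi> x = deriv (\<lambda>y. real_of_ereal (\<phi> y)) x"

definition strictly_convex_on :: "real set \<Rightarrow> (real \<Rightarrow> real) \<Rightarrow> bool" where
  "strictly_convex_on S f \<longleftrightarrow> (\<forall>x\<in>S. \<forall>y\<in>S. \<forall>t. x \<noteq> y \<and> 0 < t \<and> t < 1 \<longrightarrow>
      f ((1 - t) * x + t * y) < (1 - t) * f x + t * f y)"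

text \<open>Legendre type (Rockafellar, Sec. 26) in dimension one: proper, closed (closed epigraph),
  convex, strictly convex on the interior of the domain, essentially smooth.\<close>
definition legendre_type :: "(real \<Rightarrow> ereal) \<Rightarrow> bool" where
  "legendre_type \<phi> \<longleftrightarrow>
     (\<forall>x. \<phi> x \<noteq> -\<infinity>) \<and> edom \<phi> \<noteq> {} \<and>
     closed {(x, t::real). \<phi> x \<le> ereal t} \<and>
     (\<forall>x y t. 0 \<le> t \<and> t \<le> 1 \<longrightarrow>
        \<phi> ((1 - t) * x + t * y) \<le> ereal (1 - t) * \<phi> x + ereal t * \<phi> y) \<and>
     strictly_convex_on (interior (edom \<phi>)) (\<lambda>x. real_of_ereal (\<phi> x)) \<and>
     interior (edom \<phi>) \<noteq> {} \<and>
     (\<forall>x\<in>interior (edom \<phi>). (\<lambda>y. real_of_ereal (\<phi> y)) differentiable (at x)) \<and>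
     (\<forall>a\<in>frontier (interior (edom \<phi>)). \<forall>xs. (\<forall>k. xs k \<in> interior (edom \<phi>)) \<longrightarrow>
        xs \<longlonglongrightarrow> a \<longrightarrow> filterlim (\<lambda>k. \<bar>dphi \<phi> (xs k)\<bar>) at_top sequentially)"

definition bregman_assumption :: "(real \<Rightarrow> ereal) \<Rightarrow> bool" where
  "bregman_assumption \<phi> \<longleftrightarrow>
     is_interval (edom \<phi>) \<and> {0<..<1} \<subseteq> interior (edom \<phi>) \<and>
     legendre_type \<phi> \<and>
     (\<forall>x\<in>interior (edom \<phi>). ((\<lambda>y. real_of_ereal (\<phi> y)) has_real_derivative dphi \<phi> x) (at x)) \<and>
     continuous_on (interior (edom \<phi>)) (dphi \<phi>)"

definition dphi0_minf :: "(real \<Rightarrow> ereal) \<Rightarrow> bool" where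
  "dphi0_minf \<phi> \<longleftrightarrow> filterlim (dphi \<phi>) at_bot (at_right 0)"

text \<open>phi'_1 is finite (otherwise, by monotonicity of phi', phi'_1 = +infinity).\<close>
definition dphi1_finite :: "(real \<Rightarrow> ereal) \<Rightarrow> bool" where
  "dphi1_finite \<phi> \<longleftrightarrow> (\<exists>L. (dphi \<phi> \<longlongrightarrow> L) (at_left 1))"

definition prob_vec :: "('n::finite \<Rightarrow> real) \<Rightarrow> bool" where
  "prob_vec p \<longleftrightarrow> (\<forall>i. 0 \<le> p i) \<and> (\<Sum>i\<in>UNIV. p i) = 1"

definition transport_polytope ::
  "('n::finite \<Rightarrow> real) \<Rightarrow> ('n \<Rightarrow> real) \<Rightarrow> ('n \<Rightarrow> 'n \<Rightarrow> real) set" where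
  "transport_polytope \<mu> \<nu> = {X. (\<forall>i j. 0 \<le> X i j) \<and>
      (\<forall>i. (\<Sum>j\<in>UNIV. X i j) = \<mu> i) \<and> (\<forall>j. (\<Sum>i\<in>UNIV. X i j) = \<nu> j)}"

definition ot_objective ::
  "real \<Rightarrow> (real \<Rightarrow> ereal) \<Rightarrow> ('n::finite \<Rightarrow> 'n \<Rightarrow> real) \<Rightarrow> ('n \<Rightarrow> 'n \<Rightarrow> real) \<Rightarrow> ereal" where
  "ot_objective \<gamma> \<phi> C X =
     ereal (\<Sum>i\<in>UNIV. \<Sum>j\<in>UNIV. C i j * X i j) + ereal \<gamma> * (\<Sum>i\<in>UNIV. \<Sum>j\<in>UNIV. \<phi> (X i j))"

definition Fmap ::
  "('n::finite \<Rightarrow> real) \<Rightarrow> ('n \<Rightarrow> real) \<Rightarrow> real \<Rightarrow> (real \<Rightarrow> ereal) \<Rightarrow>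
   ('n \<Rightarrow> 'n \<Rightarrow> real) \<Rightarrow> ('n \<Rightarrow> 'n \<Rightarrow> real) set" where
  "Fmap \<mu> \<nu> \<gamma> \<phi> C = {X \<in> transport_polytope \<mu> \<nu>.
      \<forall>Y \<in> transport_polytope \<mu> \<nu>. ot_objective \<gamma> \<phi> C X \<le> ot_objective \<gamma> \<phi> C Y}"

definition T_phi ::
  "('n::finite \<Rightarrow> real) \<Rightarrow> ('n \<Rightarrow> real) \<Rightarrow> (real \<Rightarrow> ereal) \<Rightarrow> ('n \<Rightarrow> 'n \<Rightarrow> real) set" where
  "T_phi \<mu> \<nu> \<phi> = (if dphi1_finite \<phi>
      then {X \<in> transport_polytope \<mu> \<nu>. \<forall>i j. X i j \<in> {0<..1}}
      else {X \<in> transport_polytope \<mu> \<nu>. \<forall>i j. X i j \<in> {0<..<1}})"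

definition S_h :: "('n::finite \<Rightarrow> 'n \<Rightarrow> real) set" where
  "S_h = {C. (\<forall>i j. 0 \<le> C i j) \<and> (\<forall>i j. C i j = C j i) \<and> (\<forall>i. C i i = 0)}"

definition G_phi :: "real \<Rightarrow> (real \<Rightarrow> ereal) \<Rightarrow> ('n::finite \<Rightarrow> 'n \<Rightarrow> real) \<Rightarrow> 'n \<Rightarrow> 'n \<Rightarrow> real" where
  "G_phi \<gamma> \<phi> X i j = \<gamma> / 2 *
     (dphi \<phi> (X i i) + dphi \<phi> (X j j) - dphi \<phi> (X i j) - dphi \<phi> (X j i))"

definition U_phi ::
  "('n::finite \<Rightarrow> real) \<Rightarrow> ('n \<Rightarrow> real) \<Rightarrow> real \<Rightarrow> (real \<Rightarrow> ereal) \<Rightarrow> ('n \<Rightarrow> 'n \<Rightarrow> real) set" where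
  "U_phi \<mu> \<nu> \<gamma> \<phi> = {X \<in> T_phi \<mu> \<nu> \<phi>. \<forall>i j. 0 \<le> G_phi \<gamma> \<phi> X i j}"

definition max_norm :: "('n::finite \<Rightarrow> 'n \<Rightarrow> real) \<Rightarrow> real" where
  "max_norm M = Max {\<bar>M i j\<bar> | i j. True}"

end

theory Submission
  imports Defs
begin

lemma row_le:
  assumes "X \<in> transport_polytope \<mu> \<nu>" "prob_vec \<mu>" "l \<noteq> m"
  shows "X k l + X k m \<le> 1"
proof -
  have nn: "\<forall>i j. 0 \<le> X i j" and rs: "(\<Sum>j\<in>UNIV. X k j) = \<mu> k"
    using assms(1) by (auto simp: transport_polytope_def)
  have "X k l + X k m = (\<Sum>j\<in>{l,m}. X k j)" using assms(3) by simp
  also have "\<dots> \<le> (\<Sum>j\<in>UNIV. X k j)"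
    by (rule sum_mono2) (use nn in auto)
  also have "\<dots> = \<mu> k" by (rule rs)
  also have "\<mu> k = (\<Sum>i\<in>{k}. \<mu> i)" by simp
  also have "\<dots> \<le> (\<Sum>i\<in>UNIV. \<mu> i)"
    by (rule sum_mono2) (use assms(2) in \<open>auto simp: prob_vec_def\<close>)
  also have "\<dots> = 1" using assms(2) by (simp add: prob_vec_def)
  finally show ?thesis .
qed

lemma entries_lt1:
  fixes X :: "'n::finite \<Rightarrow> 'n \<Rightarrow> real"
  assumes "X \<in> transport_polytope \<mu> \<nu>" "prob_vec \<mu>" "i \<noteq> (j::'n)"
    and pos: "\<forall>k l. 0 < X k l"
  shows "X k l < 1"
proof -
  have "\<exists>m. m \<noteq> l"
  proof (cases "i = l")
    case True then show ?thesis using assms(3) by (intro exI[of _ j]) simp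
  next
    case False then show ?thesis by (intro exI[of _ i]) simp
  qed
  then obtain m where "m \<noteq> l" by blast
  then have "X k l + X k m \<le> 1" using row_le[OF assms(1,2)] by metis
  with pos show ?thesis by (smt (verit))
qed

lemma phi_fin:
  assumes "bregman_assumption \<phi>" "0 < x" "x < 1"
  shows "\<phi> x = ereal (real_of_ereal (\<phi> x))"
proof -
  have "x \<in> interior (edom \<phi>)" using assms by (auto simp: bregman_assumption_def)
  then have "\<phi> x < \<infinity>" using interior_subset by (auto simp: edom_def)
  moreover have "\<phi> x \<noteq> -\<infinity>" using assms(1) by (auto simp: bregman_assumption_def legendre_type_def)
  ultimately show ?thesis by (cases "\<phi> x") auto
qed

lemma phi_deriv:
  assumes "bregman_assumption \<phi>" "0 < x" "x < 1"
  shows "((\<lambda>y. real_of_ereal (\<phi> y)) has_real_derivative dphi \<phi> x) (at x)"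
proof -
  have "x \<in> interior (edom \<phi>)" using assms by (auto simp: bregman_assumption_def)
  then show ?thesis using assms(1) by (auto simp: bregman_assumption_def)
qed

lemma sum_delta_conj: "(\<Sum>l\<in>(UNIV::'n::finite set). if P \<and> l = b then (c::real) else 0) = (if P then c else 0)"
  by (cases P) (auto simp: sum.delta)

lemma sum_delta_conj': "(\<Sum>l\<in>(UNIV::'n::finite set). if l = b \<and> P then (c::real) else 0) = (if P then c else 0)"
  by (cases P) (auto simp: sum.delta)

lemma if_mult_left_01: "(if P then 1 else 0) * (x::real) = (if P then x else 0)"
  by simp

lemma dsum:
  "(\<Sum>k\<in>(UNIV::'n::finite set). \<Sum>l\<in>(UNIV::'m::finite set). (if k = a \<and> l = b then 1 else 0) * (w k l::real)) = w a b"
proof -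
  have "(\<Sum>l\<in>(UNIV::'m set). (if k = a \<and> l = b then 1 else 0) * (w k l::real)) = (if k = a then w k b else 0)" for k
    by (cases "k = a") (auto simp: sum.delta if_mult_left_01)
  then show ?thesis by (simp add: sum.delta)
qed

lemma kkt:
  fixes X C :: "'n::finite \<Rightarrow> 'n \<Rightarrow> real"
  assumes br: "bregman_assumption \<phi>" and pv: "prob_vec \<mu>"
    and XF: "X \<in> Fmap \<mu> \<nu> \<gamma> \<phi> C" and XT: "X \<in> T_phi \<mu> \<nu> \<phi>"
    and CS: "C \<in> S_h" and ij: "i \<noteq> j"
  shows "C i j = G_phi \<gamma> \<phi> X i j"
proof -
  define f where "f = (\<lambda>y. real_of_ereal (\<phi> y))"
  have Xp: "X \<in> transport_polytope \<mu> \<nu>" using XF by (auto simp: Fmap_def)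
  have Xpos: "\<forall>k l. 0 < X k l" using XT by (auto simp: T_phi_def split: if_splits)
  have X1: "\<And>k l. X k l < 1" using entries_lt1[OF Xp pv ij Xpos] by blast
  define D where "D = (\<lambda>k l. (if k = i \<and> l = i then 1 else 0) + (if k = j \<and> l = j then 1 else 0)
      - (if k = i \<and> l = j then 1 else 0) - (if k = j \<and> l = i then (1::real) else 0))"
  define Y where "Y = (\<lambda>t k l. X k l + t * D k l)"
  define h where "h = (\<lambda>t. (\<Sum>k\<in>UNIV. \<Sum>l\<in>UNIV. C k l * Y t k l + \<gamma> * f (Y t k l)))"
  define \<delta> where "\<delta> = min (min (X i i) (X j j)) (min (X i j) (X j i))"
  have \<delta>pos: "\<delta> > 0" using Xpos by (simp add: \<delta>_def)
  have obj: "ot_objective \<gamma> \<phi> C Z = ereal (\<Sum>k\<in>UNIV. \<Sum>l\<in>UNIV. C k l * Z k l + \<gamma> * f (Z k l))"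
    if "\<forall>k l. 0 < Z k l \<and> Z k l < 1" for Z
  proof -
    have "(\<Sum>k\<in>UNIV. \<Sum>l\<in>UNIV. \<phi> (Z k l)) = (\<Sum>k\<in>UNIV. \<Sum>l\<in>UNIV. ereal (f (Z k l)))"
      unfolding f_def using that by (intro sum.cong refl phi_fin[OF br]) auto
    also have "\<dots> = ereal (\<Sum>k\<in>UNIV. \<Sum>l\<in>UNIV. f (Z k l))" by (simp add: sum_ereal)
    finally show ?thesis unfolding ot_objective_def
      by (simp add: sum.distrib sum_distrib_left)
  qed
  have rowD: "(\<Sum>l\<in>UNIV. D k l) = 0" for k
    by (simp add: D_def sum.distrib sum_subtractf sum_delta_conj sum_delta_conj')
  have colD: "(\<Sum>k\<in>UNIV. D k l) = 0" for l
    by (simp add: D_def sum.distrib sum_subtractf sum_delta_conj sum_delta_conj')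
  have Ypos: "0 < Y t k l" if "\<bar>t\<bar> < \<delta>" for t k l
  proof -
    have "\<bar>t * D k l\<bar> < X k l \<or> D k l = 0"
      using that ij unfolding D_def \<delta>_def by auto
    then show ?thesis using Xpos[rule_format, of k l] unfolding Y_def abs_less_iff by auto
  qed
  have Yp: "Y t \<in> transport_polytope \<mu> \<nu>" if "\<bar>t\<bar> < \<delta>" for t
  proof -
    have "(\<Sum>l\<in>UNIV. Y t k l) = \<mu> k" for k
      using Xp rowD[of k] by (simp add: Y_def sum.distrib transport_polytope_def flip: sum_distrib_left)
    moreover have "(\<Sum>k\<in>UNIV. Y t k l) = \<nu> l" for l
      using Xp colD[of l] by (simp add: Y_def sum.distrib transport_polytope_def flip: sum_distrib_left)
    ultimately show ?thesis using Ypos[OF that] unfolding transport_polytope_def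
      by (auto intro: less_imp_le)
  qed
  have Y0: "Y 0 = X" by (simp add: Y_def)
  have locmin: "\<forall>t. \<bar>0 - t\<bar> < \<delta> \<longrightarrow> h 0 \<le> h t"
  proof (intro allI impI)
    fix t assume "\<bar>0 - t\<bar> < \<delta>"
    then have t: "\<bar>t\<bar> < \<delta>" by simp
    have Y1: "Y t k l < 1" for k l using entries_lt1[OF Yp[OF t] pv ij] Ypos[OF t] by blast
    have "ot_objective \<gamma> \<phi> C X \<le> ot_objective \<gamma> \<phi> C (Y t)"
      using XF Yp[OF t] by (auto simp: Fmap_def)
    moreover have "ot_objective \<gamma> \<phi> C X = ereal (h 0)"
      using obj[of X] Xpos X1 by (simp add: h_def Y0)
    moreover have "ot_objective \<gamma> \<phi> C (Y t) = ereal (h t)"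
      using obj[of "Y t"] Ypos[OF t] Y1 by (simp add: h_def)
    ultimately show "h 0 \<le> h t" by simp
  qed
  have der: "(h has_real_derivative
      (\<Sum>k\<in>UNIV. \<Sum>l\<in>UNIV. C k l * D k l + \<gamma> * (dphi \<phi> (X k l) * D k l))) (at 0)"
    unfolding h_def
  proof (intro DERIV_sum)
    fix k l
    have d1: "((\<lambda>t. Y t k l) has_real_derivative D k l) (at 0)"
      unfolding Y_def by (auto intro!: derivative_eq_intros)
    have d2: "(f has_real_derivative dphi \<phi> (Y 0 k l)) (at (Y 0 k l))"
      unfolding f_def Y0 using phi_deriv[OF br Xpos[rule_format] X1] .
    have da: "((\<lambda>t. f (Y t k l)) has_real_derivative dphi \<phi> (X k l) * D k l) (at 0)"
      using DERIV_chain2[OF d2 d1] by (simp add: Y0)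
    have db: "((\<lambda>t. C k l * Y t k l) has_real_derivative C k l * D k l) (at 0)"
      unfolding Y_def by (auto intro!: derivative_eq_intros)
    show "((\<lambda>t. C k l * Y t k l + \<gamma> * f (Y t k l)) has_real_derivative
        C k l * D k l + \<gamma> * (dphi \<phi> (X k l) * D k l)) (at 0)"
      by (rule DERIV_add[OF db DERIV_cmult[OF da]])
  qed
  have z: "(\<Sum>k\<in>UNIV. \<Sum>l\<in>UNIV. C k l * D k l + \<gamma> * (dphi \<phi> (X k l) * D k l)) = 0"
    using DERIV_local_min[OF der \<delta>pos locmin] .
  have "(\<Sum>k\<in>UNIV. \<Sum>l\<in>UNIV. C k l * D k l + \<gamma> * (dphi \<phi> (X k l) * D k l))
     = C i i + C j j - C i j - C j i + \<gamma> * (dphi \<phi> (X i i) + dphi \<phi> (X j j) - dphi \<phi> (X i j) - dphi \<phi> (X j i))"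
  proof -
    define w where "w = (\<lambda>k l. C k l + \<gamma> * dphi \<phi> (X k l))"
    have "(\<Sum>k\<in>UNIV. \<Sum>l\<in>UNIV. C k l * D k l + \<gamma> * (dphi \<phi> (X k l) * D k l))
      = (\<Sum>k\<in>UNIV. \<Sum>l\<in>UNIV. (if k = i \<and> l = i then 1 else 0) * w k l + (if k = j \<and> l = j then 1 else 0) * w k l
          - (if k = i \<and> l = j then 1 else 0) * w k l - (if k = j \<and> l = i then 1 else 0) * w k l)"
      unfolding D_def w_def by (intro sum.cong refl) (simp add: algebra_simps)
    also have "\<dots> = w i i + w j j - w i j - w j i"
      by (simp only: sum.distrib sum_subtractf dsum)
    finally show ?thesis by (simp add: w_def algebra_simps)
  qed
  moreover have "C i i = 0" "C j j = 0" "C j i = C i j" using CS by (auto simp: S_h_def)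
  ultimately show ?thesis using z by (simp add: G_phi_def field_simps)
qed

lemma max_norm_ge: "\<bar>M i j\<bar> \<le> max_norm M"
proof -
  have "{\<bar>M i j\<bar> | i j. True} = (\<lambda>(i,j). \<bar>M i j\<bar>) ` UNIV" by auto
  then have "finite {\<bar>M i j\<bar> | i j. True}" by simp
  then show ?thesis unfolding max_norm_def by (rule Max_ge) auto
qed

lemma max_norm_le: assumes "\<And>i j. \<bar>M i j\<bar> \<le> b" shows "max_norm M \<le> b"
proof -
  have "{\<bar>M i j\<bar> | i j. True} = (\<lambda>(i,j). \<bar>M i j\<bar>) ` UNIV" by auto
  then have "finite {\<bar>M i j\<bar> | i j. True}" by simp
  then show ?thesis unfolding max_norm_def using assms by (subst Max_le_iff) auto
qed

theorem proposition4:
  fixes \<mu> \<nu> :: "'n::finite \<Rightarrow> real" and \<gamma> :: real and \<phi> :: "real \<Rightarrow> ereal"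
    and Xh Xt Ch Ct :: "'n \<Rightarrow> 'n \<Rightarrow> real"
  assumes "prob_vec \<mu>" and "prob_vec \<nu>" and "\<gamma> > 0"
    and "bregman_assumption \<phi>" and "dphi0_minf \<phi>"
    and "Xh \<in> U_phi \<mu> \<nu> \<gamma> \<phi>" and "Xt \<in> U_phi \<mu> \<nu> \<gamma> \<phi>"
    and "Ch \<in> S_h" and "Ct \<in> S_h"
    and "Fmap \<mu> \<nu> \<gamma> \<phi> Ch = {Xh}" and "Fmap \<mu> \<nu> \<gamma> \<phi> Ct = {Xt}"
  shows "max_norm (\<lambda>i j. Ch i j - Ct i j)
           \<le> 2 * \<gamma> * max_norm (\<lambda>i j. dphi \<phi> (Xh i j) - dphi \<phi> (Xt i j))"
proof (rule max_norm_le)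
  fix i j
  define M where "M = max_norm (\<lambda>i j. dphi \<phi> (Xh i j) - dphi \<phi> (Xt i j))"
  have b: "\<bar>dphi \<phi> (Xh k l) - dphi \<phi> (Xt k l)\<bar> \<le> M" for k l
    unfolding M_def using max_norm_ge[of "\<lambda>i j. dphi \<phi> (Xh i j) - dphi \<phi> (Xt i j)"] by simp
  have M0: "0 \<le> M" using b[of i j] by linarith
  show "\<bar>Ch i j - Ct i j\<bar> \<le> 2 * \<gamma> * M"
  proof (cases "i = j")
    case True
    then show ?thesis using assms(8,9) M0 assms(3) by (simp add: S_h_def)
  next
    case False
    have XhT: "Xh \<in> T_phi \<mu> \<nu> \<phi>" "Xt \<in> T_phi \<mu> \<nu> \<phi>" using assms(6,7) by (auto simp: U_phi_def)
    have e1: "Ch i j = G_phi \<gamma> \<phi> Xh i j"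
      using kkt[OF assms(4,1) _ XhT(1) assms(8) False] assms(10) by auto
    have e2: "Ct i j = G_phi \<gamma> \<phi> Xt i j"
      using kkt[OF assms(4,1) _ XhT(2) assms(9) False] assms(11) by auto
    have "\<bar>Ch i j - Ct i j\<bar> = \<gamma> / 2 * \<bar>(dphi \<phi> (Xh i i) - dphi \<phi> (Xt i i)) + (dphi \<phi> (Xh j j) - dphi \<phi> (Xt j j))
        - (dphi \<phi> (Xh i j) - dphi \<phi> (Xt i j)) - (dphi \<phi> (Xh j i) - dphi \<phi> (Xt j i))\<bar>"
    proof -
      have eq: "Ch i j - Ct i j = \<gamma> / 2 * ((dphi \<phi> (Xh i i) - dphi \<phi> (Xt i i)) + (dphi \<phi> (Xh j j) - dphi \<phi> (Xt j j))
        - (dphi \<phi> (Xh i j) - dphi \<phi> (Xt i j)) - (dphi \<phi> (Xh j i) - dphi \<phi> (Xt j i)))"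
        by (simp add: e1 e2 G_phi_def algebra_simps)
      show ?thesis unfolding eq abs_mult using assms(3) by simp
    qed
    also have "\<dots> \<le> \<gamma> / 2 * (4 * M)"
      using b[of i i] b[of j j] b[of i j] b[of j i] assms(3)
      by (intro mult_left_mono) (auto simp: abs_le_iff)
    finally show ?thesis by (simp add: algebra_simps)
  qed
qed

end
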